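(* Let $G \leq \mathrm{Aut}(K_{n,n})$ be a subgroup isomorphic to $D_2 \cong \mathbb{Z}_2 \times \mathbb{Z}_2$. Suppose there is an embedding $\Gamma$ of $K_{n,n}$ in $S^3$ such that $G$ is induced on $\Gamma$ by an isomorphic subgroup $\widehat{G} \leq \mathrm{SO}(4)$. Assume each of the three involutions of $G$ fixes exactly two vertices of $V$ and exactly two vertices of $W$. Then the axes (fixed point sets in $S^3$) of the three corresponding involutions of $\widehat{G}$ all pass through two common points, and these two points are either two vertices of $V$ or two vertices of $W$.
   Context: $K_{n,n}$ is the complete bipartite graph with vertex sets $V$, $W$ of $n$ vertices each; every vertex of $V$ is adjacent to every vertex of $W$, and there are no other edges. $S^3$ is the unit sphere in $\mathbb{R}^4$, on which $\mathrm{SO}(4)$ acts by isometries. "$G$ is induced on $\Gamma$ by an isomorphic subgroup $\widehat{G} \leq \mathrm{SO}(4)$" means every element of $\widehat{G}$ leaves $\Gamma$ setwise invariant, and restricting to $\Gamma$ gives an isomorphism from $\widehat{G}$ onto $G$. An involution is an element of order 2. *)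

theory Defs
  imports "HOL-Analysis.Analysis" "HOL-Algebra.Elementary_Groups"
begin

type_synonym vert = "bool \<times> nat"

definition Vside :: "nat \<Rightarrow> vert set" where "Vside n = {False} \<times> {..<n}"
definition Wside :: "nat \<Rightarrow> vert set" where "Wside n = {True} \<times> {..<n}"
definition verts :: "nat \<Rightarrow> vert set" where "verts n = Vside n \<union> Wside n"

definition Kadj :: "nat \<Rightarrow> vert \<Rightarrow> vert \<Rightarrow> bool" where
  "Kadj n u v \<longleftrightarrow> u \<in> verts n \<and> v \<in> verts n \<and> fst u \<noteq> fst v"

definition Aut_K :: "nat \<Rightarrow> (vert \<Rightarrow> vert) set" where
  "Aut_K n = {f. bij_betw f (verts n) (verts n)
                 \<and> (\<forall>u\<in>verts n. \<forall>v\<in>verts n. Kadj n (f u) (f v) \<longleftrightarrow> Kadj n u v)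
                 \<and> (\<forall>x. x \<notin> verts n \<longrightarrow> f x = x)}"

definition Aut_group :: "nat \<Rightarrow> (vert \<Rightarrow> vert) monoid" where
  "Aut_group n = \<lparr>carrier = Aut_K n, mult = (\<circ>), one = id\<rparr>"

abbreviation S3 :: "(real^4) set" where "S3 \<equiv> sphere 0 1"

definition SO4 :: "(real^4^4) set" where
  "SO4 = {A. orthogonal_matrix A \<and> det A = 1}"

definition SO4_group :: "(real^4^4) monoid" where
  "SO4_group = \<lparr>carrier = SO4, mult = (**), one = mat 1\<rparr>"

definition edge_img :: "(nat \<Rightarrow> nat \<Rightarrow> real \<Rightarrow> real^4) \<Rightarrow> vert \<Rightarrow> vert \<Rightarrow> (real^4) set" where
  "edge_img e u v = (if fst u = False then path_image (e (snd u) (snd v))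
                     else path_image (e (snd v) (snd u)))"

definition is_embedding :: "nat \<Rightarrow> (vert \<Rightarrow> real^4) \<Rightarrow> (nat \<Rightarrow> nat \<Rightarrow> real \<Rightarrow> real^4) \<Rightarrow> bool" where
  "is_embedding n p e \<longleftrightarrow>
     inj_on p (verts n) \<and> p ` verts n \<subseteq> S3 \<and>
     (\<forall>i<n. \<forall>j<n. arc (e i j) \<and> pathstart (e i j) = p (False, i) \<and>
                  pathfinish (e i j) = p (True, j) \<and> path_image (e i j) \<subseteq> S3 \<and>
                  path_image (e i j) \<inter> p ` verts n = {p (False, i), p (True, j)}) \<and>
     (\<forall>i<n. \<forall>j<n. \<forall>i'<n. \<forall>j'<n. (i, j) \<noteq> (i', j') \<longrightarrow>
        path_image (e i j) \<inter> path_image (e i' j') =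
          p ` ({(False, i), (True, j)} \<inter> {(False, i'), (True, j')}))"

definition graph_img :: "nat \<Rightarrow> (vert \<Rightarrow> real^4) \<Rightarrow> (nat \<Rightarrow> nat \<Rightarrow> real \<Rightarrow> real^4) \<Rightarrow> (real^4) set" where
  "graph_img n p e = p ` verts n \<union> (\<Union>i<n. \<Union>j<n. path_image (e i j))"

definition restricts_to :: "nat \<Rightarrow> (vert \<Rightarrow> real^4) \<Rightarrow> (nat \<Rightarrow> nat \<Rightarrow> real \<Rightarrow> real^4)
                            \<Rightarrow> real^4^4 \<Rightarrow> (vert \<Rightarrow> vert) \<Rightarrow> bool" where
  "restricts_to n p e h f \<longleftrightarrow>
     (\<forall>v\<in>verts n. h *v p v = p (f v)) \<and>
     (\<forall>u\<in>Vside n. \<forall>w\<in>Wside n. (\<lambda>x. h *v x) ` edge_img e u w = edge_img e (f u) (f w))"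

definition induced_by :: "nat \<Rightarrow> (vert \<Rightarrow> real^4) \<Rightarrow> (nat \<Rightarrow> nat \<Rightarrow> real \<Rightarrow> real^4)
                          \<Rightarrow> (vert \<Rightarrow> vert) set \<Rightarrow> (real^4^4) set \<Rightarrow> (real^4^4 \<Rightarrow> vert \<Rightarrow> vert) \<Rightarrow> bool" where
  "induced_by n p e G Gh \<phi> \<longleftrightarrow>
     subgroup Gh SO4_group \<and>
     (\<forall>h\<in>Gh. (\<lambda>x. h *v x) ` graph_img n p e = graph_img n p e) \<and>
     (\<forall>h\<in>Gh. restricts_to n p e h (\<phi> h)) \<and>
     \<phi> \<in> iso (SO4_group\<lparr>carrier := Gh\<rparr>) ((Aut_group n)\<lparr>carrier := G\<rparr>)"

definition axis :: "real^4^4 \<Rightarrow> (real^4) set" where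
  "axis h = {x \<in> S3. h *v x = x}"

end

theory Submission
  imports Defs begin


lemma orth_inner:
  fixes A :: "real^4^4"
  assumes "orthogonal_matrix A"
  shows "(A *v x) \<bullet> (A *v y) = x \<bullet> y"
proof -
  have "orthogonal_transformation ((*v) A)"
    using assms by (simp add: orthogonal_transformation_matrix matrix_vector_mul_linear)
  thus ?thesis by (simp add: orthogonal_transformation_def)
qed

lemma subspace_fix: "subspace {x. (A::real^4^4) *v x = x}"
  by (auto simp: subspace_def matrix_vector_right_distrib matrix_vector_mult_scaleR)

lemma subspace_D: "subspace {x. (A::real^4^4) *v x = x \<and> (B::real^4^4) *v x = -x}"
  by (auto simp: subspace_def matrix_vector_right_distrib matrix_vector_mult_scaleR)

lemma negself: "(x::real^4) = - x \<Longrightarrow> x = 0"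
  by (simp add: vec_eq_iff)

lemma dimD:
  fixes A B :: "real^4^4"
  assumes AA: "\<And>x. A *v (A *v x) = x" and BB: "\<And>x. B *v (B *v x) = x"
    and AB: "\<And>x. A *v (B *v x) = B *v (A *v x)" and A1: "A \<noteq> mat 1"
    and E2: "2 \<le> dim {x. B *v x = x}" and E3: "2 \<le> dim {x. A *v (B *v x) = x}"
  shows "dim {x. A *v x = x \<and> B *v x = -x} \<le> 1"
proof (rule ccontr)
  define D where "D = {x. A *v x = x \<and> B *v x = -x}"
  define F2 where "F2 = {x. B *v x = x}"
  define F3 where "F3 = {x. A *v (B *v x) = x}"
  assume "\<not> dim {x. A *v x = x \<and> B *v x = -x} \<le> 1"
  hence dD: "2 \<le> dim D" unfolding D_def by simp
  have sD: "subspace D" unfolding D_def by (rule subspace_D)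
  have s2: "subspace F2" unfolding F2_def by (rule subspace_fix)
  have s3: "subspace F3" unfolding F3_def
    by (auto simp: subspace_def matrix_vector_right_distrib matrix_vector_mult_scaleR)
  have i2: "F2 \<inter> D = {0}" unfolding F2_def D_def
    using negself by auto
  have i3: "F3 \<inter> D = {0}" unfolding F3_def D_def
    using negself by (auto simp: vec.neg)
  have full: "{x + y |x y. x \<in> S \<and> y \<in> D} = UNIV"
    if sS: "subspace S" and iS: "S \<inter> D = {0}" and dS: "2 \<le> dim S" for S
  proof -
    have "dim {x + y |x y. x \<in> S \<and> y \<in> D} + dim (S \<inter> D) = dim S + dim D"
      by (rule dim_sums_Int[OF sS sD])
    moreover have "dim (S \<inter> D) = 0" using iS by simp
    ultimately have "dim {x + y |x y. x \<in> S \<and> y \<in> D} \<ge> 4" using dS dD by linarith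
    moreover have "dim {x + y |x y. x \<in> S \<and> y \<in> D} \<le> DIM(real^4)"
      by (rule dim_subset_UNIV)
    ultimately have "dim {x + y |x y. x \<in> S \<and> y \<in> D} = DIM(real^4)" by simp
    hence "span {x + y |x y. x \<in> S \<and> y \<in> D} = UNIV" by (rule iffD1[OF dim_eq_full])
    moreover have "span {x + y |x y. x \<in> S \<and> y \<in> D} = {x + y |x y. x \<in> S \<and> y \<in> D}"
      using span_eq_iff[THEN iffD2, OF subspace_sums[OF sS sD]] .
    ultimately show ?thesis by simp
  qed
  have F2D: "\<exists>a b. a \<in> F2 \<and> b \<in> D \<and> x = a + b" for x
  proof -
    have "x \<in> {x + y |x y. x \<in> F2 \<and> y \<in> D}" using full[OF s2 i2 E2[folded F2_def]] by simp
    thus ?thesis by blast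
  qed
  have F3D: "\<exists>a b. a \<in> F3 \<and> b \<in> D \<and> x = a + b" for x
  proof -
    have "x \<in> {x + y |x y. x \<in> F3 \<and> y \<in> D}" using full[OF s3 i3 E3[folded F3_def]] by simp
    thus ?thesis by blast
  qed
  have F3A: "A *v x = x" if "x \<in> F3" for x
  proof -
    obtain a b where ab: "a \<in> F2" "b \<in> D" "x = a + b" using F2D by blast
    have "A *v (B *v x) = A *v a - b"
      using ab by (simp add: F2_def D_def matrix_vector_right_distrib vec.neg vec.diff)
    hence eq: "A *v a - a = 2 *\<^sub>R b" using that ab unfolding F3_def
      by (auto simp: algebra_simps scaleR_2)
    have "B *v (A *v a) = A *v a" using ab(1) AB[of a] unfolding F2_def by simp
    hence "A *v a - a \<in> F2" using ab unfolding F2_def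
      by (simp add: matrix_vector_right_distrib vec.diff)
    moreover have "A *v a - a \<in> D" unfolding eq using subspace_scale[OF sD ab(2)] .
    ultimately have "A *v a - a = 0" using i2 by blast
    hence "b = 0" using eq by simp
    thus ?thesis using ab \<open>A *v a - a = 0\<close> by simp
  qed
  have "A *v x = mat 1 *v x" for x
  proof -
    obtain a b where ab: "a \<in> F3" "b \<in> D" "x = a + b" using F3D by blast
    thus ?thesis using F3A[OF ab(1)] by (simp add: D_def matrix_vector_right_distrib)
  qed
  hence "A = mat 1" by (simp add: matrix_eq)
  thus False using A1 by simp
qed


lemma arc_fixed:
  fixes \<gamma> :: "real \<Rightarrow> real^4" and T :: "real^4 \<Rightarrow> real^4"
  assumes arc: "arc \<gamma>" and Tc: "continuous_on UNIV T"
    and TI: "T ` path_image \<gamma> = path_image \<gamma>"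
    and T0: "T (pathstart \<gamma>) = pathstart \<gamma>" and T1: "T (pathfinish \<gamma>) = pathfinish \<gamma>"
    and TT: "\<And>x. T (T x) = x"
    and xin: "x \<in> path_image \<gamma>"
  shows "T x = x"
proof -
  have cg: "continuous_on {0..1} \<gamma>" and ig: "inj_on \<gamma> {0..1}"
    using arc by (auto simp: arc_def path_def)
  define g where "g = inv_into {0..1} \<gamma>"
  have gg: "g (\<gamma> t) = t" if "t \<in> {0..1}" for t
    using ig that by (simp add: g_def)
  have pi: "path_image \<gamma> = \<gamma> ` {0..1}" by (simp add: path_image_def)
  have cginv: "continuous_on (path_image \<gamma>) g"
    unfolding pi using continuous_on_inv[OF cg compact_Icc] gg by blast
  define \<sigma> where "\<sigma> t = g (T (\<gamma> t))" for t
  have Tin: "T (\<gamma> t) \<in> path_image \<gamma>" if "t \<in> {0..1}" for t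
    using TI that pi by blast
  have sig_in: "\<sigma> t \<in> {0..1}" and gsig: "\<gamma> (\<sigma> t) = T (\<gamma> t)" if tin: "t \<in> {0..1}" for t
  proof -
    obtain s where s: "s \<in> {0..1}" "T (\<gamma> t) = \<gamma> s" using Tin[OF tin] pi by auto
    show "\<sigma> t \<in> {0..1}" "\<gamma> (\<sigma> t) = T (\<gamma> t)" using s gg by (auto simp: \<sigma>_def)
  qed
  have csig: "continuous_on {0..1} \<sigma>"
    unfolding \<sigma>_def
    apply (rule continuous_on_compose2[OF cginv])
     apply (rule continuous_on_compose2[OF Tc cg])
    using Tin by auto
  have isig: "inj_on \<sigma> {0..1}"
  proof (rule inj_onI)
    fix s t assume st: "s \<in> {0..1}" "t \<in> {0..1}" "\<sigma> s = \<sigma> t"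
    hence "T (\<gamma> s) = T (\<gamma> t)" using gsig by metis
    hence "\<gamma> s = \<gamma> t" by (metis TT)
    thus "s = t" using ig st by (auto dest: inj_onD)
  qed
  have s0: "\<sigma> 0 = 0" using T0 gg by (simp add: \<sigma>_def pathstart_def)
  have s1: "\<sigma> 1 = 1" using T1 gg by (simp add: \<sigma>_def pathfinish_def)
  have mono: "\<sigma> s < \<sigma> t" if "0 \<le> s" "s < t" "t \<le> 1" for s t
  proof (cases "s = 0")
    case True
    show ?thesis
    proof (cases "t = 1")
      case True thus ?thesis using \<open>s = 0\<close> s0 s1 by simp
    next
      case False
      have "(\<sigma> 0 < \<sigma> t \<and> \<sigma> t < \<sigma> 1) \<or> (\<sigma> 1 < \<sigma> t \<and> \<sigma> t < \<sigma> 0)"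
        by (rule continuous_inj_imp_mono) (use that False True csig isig in auto)
      thus ?thesis using s0 s1 True by auto
    qed
  next
    case False
    have sub: "{0..t} \<subseteq> {0..1}" using that by auto
    have "(\<sigma> 0 < \<sigma> s \<and> \<sigma> s < \<sigma> t) \<or> (\<sigma> t < \<sigma> s \<and> \<sigma> s < \<sigma> 0)"
      by (rule continuous_inj_imp_mono)
        (use that False continuous_on_subset[OF csig sub] inj_on_subset[OF isig sub] in auto)
    moreover have "\<sigma> s \<in> {0..1}" using sig_in that by auto
    ultimately show ?thesis using s0 by auto
  qed
  have mono': "\<sigma> s < \<sigma> t" if "s \<in> {0..1}" "t \<in> {0..1}" "s < t" for s t
    using mono that by auto
  have ss: "\<sigma> (\<sigma> t) = t" if "t \<in> {0..1}" for t
  proof -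
    have "\<sigma> (\<sigma> t) = g (T (T (\<gamma> t)))" using gsig[OF that] by (simp add: \<sigma>_def)
    thus ?thesis using TT gg that by simp
  qed
  obtain t where t: "t \<in> {0..1}" "x = \<gamma> t" using xin pi by auto
  have "\<sigma> t = t"
  proof (rule ccontr)
    assume ne: "\<sigma> t \<noteq> t"
    show False
    proof (cases "\<sigma> t < t")
      case True
      hence "\<sigma> (\<sigma> t) < \<sigma> t" using mono' sig_in t by blast
      thus False using ss t True by simp
    next
      case False
      hence "t < \<sigma> t" using ne by simp
      hence "\<sigma> t < \<sigma> (\<sigma> t)" using mono' sig_in t by blast
      thus False using ss t \<open>t < \<sigma> t\<close> by simp
    qed
  qed
  thus ?thesis using gsig t by metis
qed


lemma two_indep:
  fixes a c :: "real^4"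
  assumes "a \<in> S" "c \<in> S" "a \<noteq> 0" "c \<notin> span {a}"
  shows "2 \<le> dim S"
proof -
  have ia: "independent {a}" using assms(3) by (simp add: independent_insert)
  have "c \<noteq> a" using assms(4) span_base[of a "{a}"] by auto
  hence "independent {c, a}" using ia assms(4) by (simp add: independent_insert)
  moreover have "card {c, a} = 2" using \<open>c \<noteq> a\<close> by simp
  moreover have "{c, a} \<subseteq> S" using assms by auto
  ultimately show ?thesis using independent_card_le_dim by metis
qed

lemma dimle1:
  fixes d y :: "real^4"
  assumes "dim S \<le> 1" "d \<in> S" "d \<noteq> 0" "y \<in> S"
  shows "\<exists>k. y = k *\<^sub>R d"
proof -
  have "y \<in> span {d}" using two_indep[OF assms(2,4,3)] assms(1) by linarith
  thus ?thesis by (auto simp: span_singleton)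
qed

lemma unit3:
  fixes a b c :: "real^4"
  assumes "a \<in> S" "b \<in> S" "c \<in> S" "norm a = 1" "norm b = 1" "norm c = 1"
    "a \<noteq> b" "a \<noteq> c" "b \<noteq> c"
  shows "2 \<le> dim S"
proof (rule ccontr)
  assume "\<not> 2 \<le> dim S"
  hence d1: "dim S \<le> 1" by simp
  have a0: "a \<noteq> 0" using assms(4) by auto
  have neg: "x = - a" if xx: "x \<in> S" "norm x = 1" "x \<noteq> a" for x
  proof -
    obtain k where k: "x = k *\<^sub>R a" using dimle1[OF d1 assms(1) a0 xx(1)] by blast
    hence "\<bar>k\<bar> = 1" using xx(2) assms(4) by simp
    hence "k = 1 \<or> k = -1" by auto
    thus ?thesis using k xx(3) by auto
  qed
  show False using neg[OF assms(2,5) assms(7)[symmetric]] neg[OF assms(3,6) assms(8)[symmetric]] assms(9) by simp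
qed

lemma crossing:
  fixes A B :: "real^4^4" and \<gamma> \<gamma>' :: "real \<Rightarrow> real^4" and d :: "real^4"
  assumes arc: "arc \<gamma>" and AA: "\<And>x. A *v (A *v x) = x"
    and AI: "(\<lambda>x. A *v x) ` path_image \<gamma> = path_image \<gamma>"
    and A0: "A *v pathstart \<gamma> = pathstart \<gamma>" and A1: "A *v pathfinish \<gamma> = pathfinish \<gamma>"
    and BI: "(\<lambda>x. B *v x) ` path_image \<gamma> = path_image \<gamma>'"
    and disj: "path_image \<gamma> \<inter> path_image \<gamma>' = {}"
    and f0: "pathstart \<gamma> \<bullet> d > 0" and f1: "pathfinish \<gamma> \<bullet> d < 0"
    and key: "\<And>y. A *v y = y \<Longrightarrow> y \<bullet> d = 0 \<Longrightarrow> B *v y = y"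
  shows False
proof -
  have cg: "continuous_on {0..1} \<gamma>" using arc by (auto simp: arc_def path_def)
  have cf: "continuous_on {0..1} (\<lambda>t. \<gamma> t \<bullet> d)"
    by (intro continuous_intros cg)
  obtain t where t: "0 \<le> t" "t \<le> 1" "\<gamma> t \<bullet> d = 0"
    using IVT2'[of "\<lambda>t. \<gamma> t \<bullet> d" 1 0 0] cf f0 f1
    by (auto simp: pathstart_def pathfinish_def)
  have yin: "\<gamma> t \<in> path_image \<gamma>" using t by (simp add: path_image_def)
  have ct: "continuous_on UNIV (\<lambda>x. A *v x)"
    by (simp add: linear_continuous_on matrix_vector_mul_linear)
  have "A *v \<gamma> t = \<gamma> t"
    by (rule arc_fixed[OF arc ct AI A0 A1 AA yin])
  hence "B *v \<gamma> t = \<gamma> t" using key t(3) by blast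
  hence "\<gamma> t \<in> path_image \<gamma>'" using BI yin by (metis image_eqI)
  thus False using disj yin by blast
qed


lemma Gfacts:
  assumes sg: "subgroup G (Aut_group n)"
    and iso: "(Aut_group n)\<lparr>carrier := G\<rparr> \<cong> integer_mod_group 2 \<times>\<times> integer_mod_group 2"
  shows "card G = 4" "\<forall>g\<in>G. g \<circ> g = id" "id \<in> G" "\<forall>g\<in>G. \<forall>h\<in>G. g \<circ> h \<in> G"
    "G \<subseteq> Aut_K n"
proof -
  show idG: "id \<in> G" using subgroup.one_closed[OF sg] by (simp add: Aut_group_def)
  show cl: "\<forall>g\<in>G. \<forall>h\<in>G. g \<circ> h \<in> G" using subgroup.m_closed[OF sg] by (simp add: Aut_group_def)
  show "G \<subseteq> Aut_K n" using subgroup.subset[OF sg] by (simp add: Aut_group_def)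
  obtain \<psi> where psi: "\<psi> \<in> iso ((Aut_group n)\<lparr>carrier := G\<rparr>) (integer_mod_group 2 \<times>\<times> integer_mod_group 2)"
    using iso by (auto simp: is_iso_def)
  have car: "carrier (integer_mod_group 2 \<times>\<times> integer_mod_group 2) = {0,1} \<times> {0,1}"
    by (auto simp: DirProd_def integer_mod_group_def)
  have bij: "bij_betw \<psi> G ({0,1} \<times> {0,1})" using psi car by (simp add: iso_def)
  have hom: "\<psi> (g \<circ> h) = (case \<psi> g of (a, b) \<Rightarrow> case \<psi> h of (c, d) \<Rightarrow> ((a + c) mod 2, (b + d) mod 2))"
    if "g \<in> G" "h \<in> G" for g h
    using psi that by (auto simp: iso_def hom_def Aut_group_def DirProd_def integer_mod_group_def split: prod.splits)
  have vals: "\<psi> g \<in> {0,1} \<times> {0,1}" if "g \<in> G" for g using bij that by (auto simp: bij_betw_def)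
  have psid: "\<psi> id = (0, 0)"
  proof -
    have "\<psi> id = \<psi> (id \<circ> id)" by simp
    also have "\<dots> = (case \<psi> id of (a, b) \<Rightarrow> case \<psi> id of (c, d) \<Rightarrow> ((a + c) mod 2, (b + d) mod 2))"
      using hom idG by blast
    finally show ?thesis using vals[OF idG] by auto
  qed
  show "\<forall>g\<in>G. g \<circ> g = id"
  proof
    fix g assume g: "g \<in> G"
    have "\<psi> (g \<circ> g) = (0, 0)" using hom[OF g g] vals[OF g] by auto
    hence "\<psi> (g \<circ> g) = \<psi> id" using psid by simp
    moreover have "inj_on \<psi> G" using bij by (simp add: bij_betw_def)
    ultimately show "g \<circ> g = id" using cl g idG by (auto dest: inj_onD)
  qed
  have "card G = card ({0::int,1} \<times> {0::int,1})" using bij_betw_same_card[OF bij] .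
  thus "card G = 4" by (simp add: card_cartesian_product)
qed

lemma side_V:
  assumes g: "g \<in> Aut_K n" and b: "b \<in> Wside n" "g b = b" and v: "v \<in> Vside n"
  shows "g v \<in> Vside n"
proof -
  have vv: "v \<in> verts n" "b \<in> verts n" using b v by (auto simp: verts_def)
  have "Kadj n v b" using vv b v by (auto simp: Kadj_def Vside_def Wside_def)
  hence "Kadj n (g v) (g b)" using g vv by (auto simp: Aut_K_def)
  hence "g v \<in> verts n" "fst (g v) \<noteq> True" using b by (auto simp: Kadj_def Wside_def)
  thus ?thesis by (auto simp: verts_def Vside_def Wside_def)
qed

lemma side_W:
  assumes g: "g \<in> Aut_K n" and b: "b \<in> Vside n" "g b = b" and v: "v \<in> Wside n"
  shows "g v \<in> Wside n"
proof -
  have vv: "v \<in> verts n" "b \<in> verts n" using b v by (auto simp: verts_def)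
  have "Kadj n v b" using vv b v by (auto simp: Kadj_def Vside_def Wside_def)
  hence "Kadj n (g v) (g b)" using g vv by (auto simp: Aut_K_def)
  hence "g v \<in> verts n" "fst (g v) \<noteq> False" using b by (auto simp: Kadj_def Vside_def)
  thus ?thesis by (auto simp: verts_def Vside_def Wside_def)
qed

lemma Aut_inj: "g \<in> Aut_K n \<Longrightarrow> inj_on g (verts n)"
  by (auto simp: Aut_K_def bij_betw_def)

theorem lemma3:
  fixes n :: nat and G :: "(vert \<Rightarrow> vert) set"
    and p :: "vert \<Rightarrow> real^4" and e :: "nat \<Rightarrow> nat \<Rightarrow> real \<Rightarrow> real^4"
    and Gh :: "(real^4^4) set" and \<phi> :: "real^4^4 \<Rightarrow> vert \<Rightarrow> vert"
  assumes G_sub: "subgroup G (Aut_group n)"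
    and G_D2: "(Aut_group n)\<lparr>carrier := G\<rparr> \<cong> integer_mod_group 2 \<times>\<times> integer_mod_group 2"
    and emb: "is_embedding n p e"
    and ind: "induced_by n p e G Gh \<phi>"
    and fix2: "\<And>g. g \<in> G \<Longrightarrow> g \<noteq> id \<Longrightarrow>
                 card {v \<in> Vside n. g v = v} = 2 \<and> card {w \<in> Wside n. g w = w} = 2"
  shows "\<exists>a b. a \<noteq> b \<and>
           (\<forall>h\<in>Gh. h \<noteq> mat 1 \<longrightarrow> a \<in> axis h \<and> b \<in> axis h) \<and>
           ((\<exists>v\<in>Vside n. \<exists>v'\<in>Vside n. a = p v \<and> b = p v') \<or>
            (\<exists>w\<in>Wside n. \<exists>w'\<in>Wside n. a = p w \<and> b = p w'))"
proof -
  note GF = Gfacts[OF G_sub G_D2]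
  have sgh: "subgroup Gh SO4_group" and rs: "\<And>h. h \<in> Gh \<Longrightarrow> restricts_to n p e h (\<phi> h)"
    and phiso: "\<phi> \<in> iso (SO4_group\<lparr>carrier := Gh\<rparr>) ((Aut_group n)\<lparr>carrier := G\<rparr>)"
    using ind by (auto simp: induced_by_def)
  have one_Gh: "mat 1 \<in> Gh" using subgroup.one_closed[OF sgh] by (simp add: SO4_group_def)
  have mcl: "h ** k \<in> Gh" if "h \<in> Gh" "k \<in> Gh" for h k
    using subgroup.m_closed[OF sgh] that by (simp add: SO4_group_def)
  have orth: "orthogonal_matrix h" if "h \<in> Gh" for h
    using subgroup.subset[OF sgh] that by (auto simp: SO4_group_def SO4_def)
  have phbij: "bij_betw \<phi> Gh G" using phiso by (simp add: iso_def)
  have phhom: "\<phi> (h ** k) = \<phi> h \<circ> \<phi> k" if "h \<in> Gh" "k \<in> Gh" for h k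
    using phiso that by (auto simp: iso_def hom_def SO4_group_def Aut_group_def)
  have phG: "\<phi> h \<in> G" if "h \<in> Gh" for h using phbij that by (auto simp: bij_betw_def)
  have phinj: "inj_on \<phi> Gh" using phbij by (simp add: bij_betw_def)
  have ph1: "\<phi> (mat 1) = id"
  proof -
    have "\<phi> (mat 1) = \<phi> (mat 1 ** mat 1)" by simp
    also have "\<dots> = \<phi> (mat 1) \<circ> \<phi> (mat 1)" using phhom one_Gh by blast
    also have "\<dots> = id" using GF(2) phG[OF one_Gh] by blast
    finally show ?thesis .
  qed
  have sq: "h ** h = mat 1" if h: "h \<in> Gh" for h
  proof -
    have "\<phi> (h ** h) = id" using phhom[OF h h] GF(2) phG[OF h] by simp
    thus ?thesis using ph1 phinj mcl[OF h h] one_Gh by (metis inj_onD)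
  qed
  have phne: "\<phi> h \<noteq> id" if "h \<in> Gh" "h \<noteq> mat 1" for h
    using that ph1 phinj one_Gh by (metis inj_onD)
  have cardGh: "card Gh = 4" using bij_betw_same_card[OF phbij] GF(1) by simp
  have finGh: "finite Gh" using cardGh by (metis card.infinite zero_neq_numeral)
  have comm: "k ** h = h ** k" if h: "h \<in> Gh" and k: "k \<in> Gh" for h k
  proof -
    have "k ** h = (h ** h) ** (k ** h) ** (k ** k)" by (simp add: sq h k)
    also have "\<dots> = h ** ((h ** k) ** (h ** k)) ** k" by (simp add: matrix_mul_assoc)
    also have "\<dots> = h ** k" by (simp add: sq mcl h k)
    finally show ?thesis .
  qed
  have vsq: "h *v (h *v x) = x" if "h \<in> Gh" for h x
    by (simp add: matrix_vector_mul_assoc sq that)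
  have hp: "h *v p v = p (\<phi> h v)" if "h \<in> Gh" "v \<in> verts n" for h v
    using rs[OF that(1)] that(2) by (simp add: restricts_to_def)
  have himg: "(\<lambda>x. h *v x) ` edge_img e u w = edge_img e (\<phi> h u) (\<phi> h w)"
    if "h \<in> Gh" "u \<in> Vside n" "w \<in> Wside n" for h u w
    using rs[OF that(1)] that(2,3) by (simp add: restricts_to_def)
  have pinj: "inj_on p (verts n)" and punit: "\<And>v. v \<in> verts n \<Longrightarrow> norm (p v) = 1"
    using emb by (auto simp: is_embedding_def)
  have VW: "Vside n \<subseteq> verts n" "Wside n \<subseteq> verts n" by (auto simp: verts_def)
  have Emb1: "arc (e i j) \<and> pathstart (e i j) = p (False, i) \<and> pathfinish (e i j) = p (True, j)"
    if "i < n" "j < n" for i j using emb that by (simp add: is_embedding_def)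
  have Emb2: "path_image (e i j) \<inter> path_image (e i' j') =
          p ` ({(False, i), (True, j)} \<inter> {(False, i'), (True, j')})"
    if "i < n" "j < n" "i' < n" "j' < n" "(i, j) \<noteq> (i', j')" for i j i' j'
    by (rule emb[unfolded is_embedding_def, THEN conjunct2, THEN conjunct2, THEN conjunct2, rule_format, OF that])
  have Aut: "\<phi> h \<in> Aut_K n" if "h \<in> Gh" for h using GF(5) phG[OF that] by blast
  obtain h1 where h1: "h1 \<in> Gh" "h1 \<noteq> mat 1"
  proof -
    have "\<not> Gh \<subseteq> {mat 1}" using cardGh card_mono[of "{mat 1}" Gh] by fastforce
    thus ?thesis using that by blast
  qed
  obtain h2 where h2: "h2 \<in> Gh" "h2 \<noteq> mat 1" "h2 \<noteq> h1"
  proof -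
    have "card {mat 1, h1} \<le> 2" by (simp add: card_insert_le_m1)
    hence "\<not> Gh \<subseteq> {mat 1, h1}" using cardGh card_mono[of "{mat 1, h1}" Gh] by fastforce
    thus ?thesis using that by blast
  qed
  define h3 where "h3 = h1 ** h2"
  have h3: "h3 \<in> Gh" unfolding h3_def using mcl h1 h2 by blast
  have h3ne: "h3 \<noteq> mat 1" "h3 \<noteq> h1" "h3 \<noteq> h2"
  proof -
    show "h3 \<noteq> mat 1"
    proof
      assume "h3 = mat 1"
      hence "h1 ** (h1 ** h2) = h1" unfolding h3_def by simp
      hence "h2 = h1" by (simp add: matrix_mul_assoc sq h1)
      thus False using h2 by simp
    qed
    show "h3 \<noteq> h1"
    proof
      assume "h3 = h1"
      hence "h1 ** (h1 ** h2) = h1 ** h1" unfolding h3_def by simp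
      hence "h2 = mat 1" by (simp add: matrix_mul_assoc sq h1)
      thus False using h2 by simp
    qed
    show "h3 \<noteq> h2"
    proof
      assume "h3 = h2"
      hence "(h1 ** h2) ** h2 = h2 ** h2" unfolding h3_def by simp
      hence "h1 = mat 1" by (simp add: matrix_mul_assoc[symmetric] sq h2)
      thus False using h1 by simp
    qed
  qed
  have Gh_eq: "Gh = {mat 1, h1, h2, h3}"
  proof -
    have "card {mat 1, h1, h2, h3} = 4" using h1 h2 h3ne by auto
    moreover have "{mat 1, h1, h2, h3} \<subseteq> Gh" using one_Gh h1 h2 h3 by auto
    ultimately show ?thesis using card_subset_eq[OF finGh] cardGh by metis
  qed
  define g1 where "g1 = \<phi> h1"
  define g2 where "g2 = \<phi> h2"
  have g3: "\<phi> h3 = g1 \<circ> g2" unfolding h3_def g1_def g2_def using phhom h1 h2 by blast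
  have g12: "g1 (g2 x) = g2 (g1 x)" for x
  proof -
    have "g1 \<circ> g2 = g2 \<circ> g1" unfolding g1_def g2_def
      using phhom[OF h1(1) h2(1)] phhom[OF h2(1) h1(1)] comm[OF h1(1) h2(1)] by simp
    thus ?thesis by (metis comp_apply)
  qed
  have fx1: "card {v \<in> Vside n. g1 v = v} = 2" "card {w \<in> Wside n. g1 w = w} = 2"
    using fix2[OF phG[OF h1(1)] phne[OF h1]] unfolding g1_def by auto
  have fx2: "card {v \<in> Vside n. g2 v = v} = 2" "card {w \<in> Wside n. g2 w = w} = 2"
    using fix2[OF phG[OF h2(1)] phne[OF h2(1,2)]] unfolding g2_def by auto
  have fx3: "card {v \<in> Vside n. (g1 \<circ> g2) v = v} = 2" "card {w \<in> Wside n. (g1 \<circ> g2) w = w} = 2"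
    using fix2[OF phG[OF h3] phne[OF h3 h3ne(1)]] unfolding g3 by auto
  have A1: "g1 \<in> Aut_K n" "g2 \<in> Aut_K n" unfolding g1_def g2_def using Aut h1 h2 by auto
  have claim: "\<exists>u u'. u \<noteq> u' \<and> ((u \<in> Vside n \<and> u' \<in> Vside n) \<or> (u \<in> Wside n \<and> u' \<in> Wside n)) \<and>
      g1 u = u \<and> g2 u = u \<and> g1 u' = u' \<and> g2 u' = u'"
  proof -
    obtain v1 v2 where V12: "{v \<in> Vside n. g1 v = v} = {v1, v2}" "v1 \<noteq> v2"
      using fx1(1) by (auto simp: card_2_iff)
    obtain w1 w2 where W12: "{w \<in> Wside n. g1 w = w} = {w1, w2}" "w1 \<noteq> w2"
      using fx1(2) by (auto simp: card_2_iff)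
    have v12: "v1 \<in> Vside n" "v2 \<in> Vside n" "g1 v1 = v1" "g1 v2 = v2" using V12(1) by blast+
    have w12: "w1 \<in> Wside n" "w2 \<in> Wside n" "g1 w1 = w1" "g1 w2 = w2" using W12(1) by blast+
    obtain b where b: "b \<in> Wside n" "g2 b = b"
      using fx2(2) by (metis (mono_tags, lifting) card_2_iff insertI1 mem_Collect_eq)
    obtain c where c: "c \<in> Vside n" "g2 c = c"
      using fx2(1) by (metis (mono_tags, lifting) card_2_iff insertI1 mem_Collect_eq)
    have g2V: "g2 v \<in> {v1, v2}" if "v \<in> {v1, v2}" for v
    proof -
      have "v \<in> Vside n" using that v12 by auto
      hence "g2 v \<in> Vside n" using side_V[OF A1(2) b] by blast
      moreover have "g1 (g2 v) = g2 v" using g12 that v12 by auto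
      ultimately show ?thesis using V12(1) by blast
    qed
    have g2W: "g2 w \<in> {w1, w2}" if "w \<in> {w1, w2}" for w
    proof -
      have "w \<in> Wside n" using that w12 by auto
      hence "g2 w \<in> Wside n" using side_W[OF A1(2) c] by blast
      moreover have "g1 (g2 w) = g2 w" using g12 that w12 by auto
      ultimately show ?thesis using W12(1) by blast
    qed
    have i2: "inj_on g2 (verts n)" using Aut_inj[OF A1(2)] .
    have vv: "v1 \<in> verts n" "v2 \<in> verts n" "w1 \<in> verts n" "w2 \<in> verts n"
      using v12 w12 VW by auto
    show ?thesis
    proof (cases "g2 v1 = v1")
      case True
      have "g2 v2 \<noteq> v1" using True V12(2) i2 vv by (metis inj_onD)
      hence "g2 v2 = v2" using g2V[of v2] by auto
      thus ?thesis using True v12 V12(2) by blast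
    next
      case nv: False
      show ?thesis
      proof (cases "g2 w1 = w1")
        case True
        have "g2 w2 \<noteq> w1" using True W12(2) i2 vv by (metis inj_onD)
        hence "g2 w2 = w2" using g2W[of w2] by auto
        thus ?thesis using True w12 W12(2) by blast
      next
        case nw: False
        have sv1: "g2 v1 = v2" using nv g2V[of v1] by auto
        have "g2 v2 \<noteq> g2 v1" using V12(2) inj_onD[OF i2] vv by metis
        hence sv2: "g2 v2 = v1" using g2V[of v2] sv1 by auto
        have sw1: "g2 w1 = w2" using nw g2W[of w1] by auto
        have "g2 w2 \<noteq> g2 w1" using W12(2) inj_onD[OF i2] vv by metis
        hence sw2: "g2 w2 = w1" using g2W[of w2] sw1 by auto
        note sv = sv1 sv2 and sw = sw1 sw2
        have h1v: "h1 *v p v = p (g1 v)" if "v \<in> verts n" for v using hp[OF h1(1) that] g1_def by simp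
        have h2v: "h2 *v p v = p (g2 v)" if "v \<in> verts n" for v using hp[OF h2(1) that] g2_def by simp
        have h12v: "h1 *v (h2 *v p v) = p ((g1 \<circ> g2) v)" if "v \<in> verts n" for v
          using hp[OF h3 that] g3 unfolding h3_def by (simp add: matrix_vector_mul_assoc)
        have AA: "\<And>x. h1 *v (h1 *v x) = x" using vsq h1 by blast
        have BB: "\<And>x. h2 *v (h2 *v x) = x" using vsq h2 by blast
        have AB: "\<And>x. h1 *v (h2 *v x) = h2 *v (h1 *v x)"
          by (simp add: matrix_vector_mul_assoc comm[OF h1(1) h2(1)])
        have three: "2 \<le> dim S" if Ssub: "\<And>v. v \<in> verts n \<Longrightarrow> g v = v \<Longrightarrow> p v \<in> S"
          and cv: "card {v \<in> Vside n. g v = v} = 2" and cw: "card {w \<in> Wside n. g w = w} = 2" for S g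
        proof -
          obtain a a' where aa: "{v \<in> Vside n. g v = v} = {a, a'}" "a \<noteq> a'" using cv by (auto simp: card_2_iff)
          hence a: "a \<in> Vside n" "a' \<in> Vside n" "g a = a" "g a' = a'" by blast+
          obtain c where c: "c \<in> Wside n" "g c = c"
            using cw by (metis (mono_tags, lifting) card_2_iff insertI1 mem_Collect_eq)
          have vs: "a \<in> verts n" "a' \<in> verts n" "c \<in> verts n" using a c VW by auto
          have ne: "a \<noteq> c" "a' \<noteq> c" using a c by (auto simp: Vside_def Wside_def)
          have pn: "p a \<noteq> p a'" "p a \<noteq> p c" "p a' \<noteq> p c"
            using ne aa(2) vs pinj by (auto dest: inj_onD)
          show ?thesis
            by (rule unit3[of "p a" S "p a'" "p c"]) (use Ssub vs a c punit pn in auto)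
        qed
        have dE2: "2 \<le> dim {x. h2 *v x = x}" by (rule three[OF _ fx2]) (simp add: h2v)
        have dE3: "2 \<le> dim {x. h1 *v (h2 *v x) = x}" by (rule three[OF _ fx3]) (simp add: h12v)
        have dD: "dim {x. h1 *v x = x \<and> h2 *v x = -x} \<le> 1" by (rule dimD[OF AA BB AB h1(2) dE2 dE3])
        define d where "d = p v1 - p v2"
        have dD_in: "d \<in> {x. h1 *v x = x \<and> h2 *v x = -x}"
          using h1v h2v vv v12 sv by (simp add: d_def vec.diff)
        have d0: "d \<noteq> 0" using pinj vv V12(2) by (auto simp: d_def dest: inj_onD)
        have dd: "d \<bullet> d > 0" using d0 by simp
        have Bd: "h2 *v d = -d" using dD_in by simp
        have fB: "(h2 *v x) \<bullet> d = - (x \<bullet> d)" for x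
        proof -
          have "(h2 *v x) \<bullet> (h2 *v d) = x \<bullet> d" by (rule orth_inner[OF orth[OF h2(1)]])
          thus ?thesis using Bd by simp
        qed
        have key: "h2 *v y = y" if yy: "h1 *v y = y" "y \<bullet> d = 0" for y
        proof -
          define z where "z = y - h2 *v y"
          have "z \<in> {x. h1 *v x = x \<and> h2 *v x = -x}" unfolding z_def
            using yy AB[of y] BB[of y] by (simp add: vec.diff)
          then obtain k where k: "z = k *\<^sub>R d" using dimle1[OF dD dD_in d0] by blast
          have "z \<bullet> d = 0" unfolding z_def using yy fB[of y] by (simp add: inner_diff_left)
          hence "k * (d \<bullet> d) = 0" using k by simp
          hence "k = 0" using dd by simp
          thus ?thesis using k z_def by simp
        qed
        have fv1: "p v1 \<bullet> d > 0"
        proof -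
          have n1: "p v1 \<bullet> p v1 = 1" "p v2 \<bullet> p v2 = 1" using punit vv by (simp_all add: norm_eq_1)
          have "d \<bullet> d = 2 * (p v1 \<bullet> d)" using n1
            by (simp add: d_def inner_diff_left inner_diff_right inner_commute)
          thus ?thesis using dd by simp
        qed
        have fw: "p w2 \<bullet> d = - (p w1 \<bullet> d)" using fB[of "p w1"] h2v vv sw by simp
        have fw1: "p w1 \<bullet> d \<noteq> 0"
        proof
          assume "p w1 \<bullet> d = 0"
          hence "h2 *v p w1 = p w1" using key h1v vv w12 by simp
          hence "p w2 = p w1" using h2v vv sw by simp
          thus False using pinj vv W12(2) by (auto dest: inj_onD)
        qed
        obtain i1 where i1: "v1 = (False, i1)" "i1 < n" using v12(1) by (auto simp: Vside_def)
        obtain i2 where i2': "v2 = (False, i2)" "i2 < n" using v12(2) by (auto simp: Vside_def)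
        have i12: "i1 \<noteq> i2" using i1 i2' V12(2) by auto
        have cross: False if j: "j < n" "j' < n" "j \<noteq> j'" "g1 (True, j) = (True, j)"
          "g2 (True, j) = (True, j')" "p (True, j) \<bullet> d < 0" for j j'
        proof -
          have a1: "arc (e i1 j)" "pathstart (e i1 j) = p (False, i1)" "pathfinish (e i1 j) = p (True, j)"
            using Emb1[OF i1(2) j(1)] by auto
          have "path_image (e i1 j) \<inter> path_image (e i2 j') =
                p ` ({(False, i1), (True, j)} \<inter> {(False, i2), (True, j')})"
            using Emb2[OF i1(2) j(1) i2'(2) j(2)] j(3) by auto
          hence disj: "path_image (e i1 j) \<inter> path_image (e i2 j') = {}" using i12 j(3) by auto
          have wj: "(True, j) \<in> Wside n" "(True, j) \<in> verts n" using j by (auto simp: Wside_def verts_def)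
          have AI: "(\<lambda>x. h1 *v x) ` path_image (e i1 j) = path_image (e i1 j)"
            using himg[OF h1(1) v12(1) wj(1)] v12(3) j(4) unfolding g1_def[symmetric]
            by (simp add: edge_img_def i1)
          have BI: "(\<lambda>x. h2 *v x) ` path_image (e i1 j) = path_image (e i2 j')"
            using himg[OF h2(1) v12(1) wj(1)] sv(1) j(5) unfolding g2_def[symmetric]
            by (simp add: edge_img_def i1 i2')
          have A0: "h1 *v pathstart (e i1 j) = pathstart (e i1 j)"
            using a1(2) h1v[of v1] vv v12(3) i1 by simp
          have A1': "h1 *v pathfinish (e i1 j) = pathfinish (e i1 j)"
            using a1(3) h1v[of "(True, j)"] wj j(4) by simp
          have f0: "pathstart (e i1 j) \<bullet> d > 0" using a1(2) fv1 i1 by simp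
          have f1: "pathfinish (e i1 j) \<bullet> d < 0" using a1(3) j(6) by simp
          show False
            by (rule crossing[OF a1(1) AA AI A0 A1' BI disj f0 f1 key])
        qed
        obtain j1 where j1: "w1 = (True, j1)" "j1 < n" using w12(1) by (auto simp: Wside_def)
        obtain j2 where j2: "w2 = (True, j2)" "j2 < n" using w12(2) by (auto simp: Wside_def)
        have j12: "j1 \<noteq> j2" using j1 j2 W12(2) by auto
        show ?thesis
        proof (cases "p w1 \<bullet> d < 0")
          case True
          have False using cross[OF j1(2) j2(2) j12] True w12(3) sw(1) j1 j2 by simp
          thus ?thesis ..
        next
          case False
          hence "p w2 \<bullet> d < 0" using fw fw1 by simp
          hence False using cross[OF j2(2) j1(2) j12[symmetric]] w12(4) sw(2) j1 j2 by simp
          thus ?thesis ..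
        qed
      qed
    qed
  qed
  then obtain u u' where uu: "u \<noteq> u'" "(u \<in> Vside n \<and> u' \<in> Vside n) \<or> (u \<in> Wside n \<and> u' \<in> Wside n)"
    "g1 u = u" "g2 u = u" "g1 u' = u'" "g2 u' = u'" by blast
  have uv: "u \<in> verts n" "u' \<in> verts n" using uu(2) VW by auto
  have fixall: "\<phi> h x = x" if "h \<in> Gh" "x \<in> {u, u'}" for h x
    using that Gh_eq ph1 g3 uu by (auto simp: g1_def g2_def)
  show ?thesis
  proof (intro exI conjI)
    show "p u \<noteq> p u'" using uu(1) uv pinj by (auto dest: inj_onD)
    show "\<forall>h\<in>Gh. h \<noteq> mat 1 \<longrightarrow> p u \<in> axis h \<and> p u' \<in> axis h"
      using hp fixall uv punit by (auto simp: axis_def)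
    show "(\<exists>v\<in>Vside n. \<exists>v'\<in>Vside n. p u = p v \<and> p u' = p v') \<or>
          (\<exists>w\<in>Wside n. \<exists>w'\<in>Wside n. p u = p w \<and> p u' = p w')" using uu(2) by blast
  qed
qed
end
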